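(* Let $p>1$, $h\in C[0,\infty)$ and $h(s)>0$ for $s>0$. Assume that $h$ is bounded on $[0,\infty)$ and satisfies \[ \lim_{t\to\infty}t^{-(p+1)/2} \int_0^t s^{p+1} h(s)\, ds = \infty. \] Let $\{w_c\}_{c>0}$ be a family of least energy solutions to the problem \[ w'' + h(s)|w|^{p-1} w = 0 \ (0<s<c), \quad w(0)=w(c)=0, \quad w(s)>0 \ (0<s<c). \] Then $w_c'(0)\to0$ as $c\to\infty$.
   Context: For $c>0$, the Rayleigh quotient is $R(w)= \int_0^c |w'(s)|^2 ds \,/\, \left(\int_0^c h(s) |w(s)|^{p+1} ds \right)^{2/(p+1)}$ and the energy is $E(c) = \inf_{w \in H^1_0(0,c),\,w\not\equiv 0} R(w)$. A least energy solution $w_c$ is a solution of the boundary value problem $w'' + h(s)|w|^{p-1} w = 0$ on $(0,c)$, $w(0)=w(c)=0$, $w>0$ on $(0,c)$, satisfying $R(w_c)=E(c)$; such a solution exists for every $c>0$. *)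

theory Defs
  imports "HOL-Analysis.Analysis"
begin

text \<open>Elements of H^1_0(0,c) in one dimension: w is the primitive of a square
integrable weak derivative g on [0,c], with w(0) = 0 and w(c) = 0.\<close>
definition H10 :: "real \<Rightarrow> (real \<Rightarrow> real) \<Rightarrow> (real \<Rightarrow> real) \<Rightarrow> bool" where
  "H10 c w g \<longleftrightarrow> g integrable_on {0..c} \<and> (\<lambda>s. (g s)\<^sup>2) integrable_on {0..c}
     \<and> (\<forall>x\<in>{0..c}. w x = integral {0..x} g) \<and> w c = 0"

definition rayleigh :: "(real \<Rightarrow> real) \<Rightarrow> real \<Rightarrow> real \<Rightarrow> (real \<Rightarrow> real) \<Rightarrow> (real \<Rightarrow> real) \<Rightarrow> real" where
  "rayleigh h p c w g = integral {0..c} (\<lambda>s. (g s)\<^sup>2)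
     / (integral {0..c} (\<lambda>s. h s * \<bar>w s\<bar> powr (p + 1))) powr (2 / (p + 1))"

definition energy :: "(real \<Rightarrow> real) \<Rightarrow> real \<Rightarrow> real \<Rightarrow> real" where
  "energy h p c = Inf {rayleigh h p c w g | w g. H10 c w g \<and> (\<exists>s\<in>{0..c}. w s \<noteq> 0)}"

definition least_energy_sol :: "(real \<Rightarrow> real) \<Rightarrow> real \<Rightarrow> real \<Rightarrow> (real \<Rightarrow> real) \<Rightarrow> bool" where
  "least_energy_sol h p c w \<longleftrightarrow>
     continuous_on {0..c} w \<and> w 0 = 0 \<and> w c = 0 \<and> (\<forall>s\<in>{0<..<c}. w s > 0)
     \<and> (\<forall>s\<in>{0<..<c}. w differentiable (at s)
          \<and> (deriv w has_real_derivative - (h s * \<bar>w s\<bar> powr (p - 1) * w s)) (at s))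
     \<and> H10 c w (deriv w)
     \<and> rayleigh h p c w (deriv w) = energy h p c"

end

theory Submission
  imports Defs
begin
lemma powr_times_self: "0 \<le> (x::real) \<Longrightarrow> x powr q * x = x powr (q + 1)"
  by (cases "x = 0") (auto simp: powr_add)

lemma ode_facts:
  fixes h w :: "real \<Rightarrow> real" and p c M :: real
  assumes p: "p > 1" and hcont: "continuous_on {0..} h" and hpos: "\<forall>s>0. h s > 0"
    and hM: "\<forall>s\<ge>0. \<bar>h s\<bar> \<le> M" and c: "c > 0" and les: "least_energy_sol h p c w"
  shows "\<exists>a. (w has_real_derivative a) (at 0 within {0..c}) \<and> a > 0
     \<and> (\<forall>\<delta>. 0 \<le> \<delta> \<longrightarrow> \<delta> \<le> c \<longrightarrow> M * (a*\<delta>) powr p * \<delta> \<le> a/2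
            \<longrightarrow> a^2*\<delta>/4 \<le> integral {0..c} (\<lambda>s. (deriv w s)^2))
     \<and> integral {0..c} (\<lambda>s. (deriv w s)^2) = integral {0..c} (\<lambda>s. h s * \<bar>w s\<bar> powr (p+1))"
proof -
  define g where "g = deriv w"
  from les have cont: "continuous_on {0..c} w" and w0: "w 0 = 0" and wc: "w c = 0"
    and wpos: "\<forall>s\<in>{0<..<c}. w s > 0"
    and ode: "\<forall>s\<in>{0<..<c}. w differentiable (at s)
          \<and> (g has_real_derivative - (h s * \<bar>w s\<bar> powr (p - 1) * w s)) (at s)"
    and H: "H10 c w g"
    unfolding least_energy_sol_def g_def by auto
  have M0: "M \<ge> 0" using hM[rule_format, of 0] by linarith
  define \<phi> where "\<phi> s = - (h s * \<bar>w s\<bar> powr (p - 1) * w s)" for s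
  have wnn: "w s \<ge> 0" if "s \<in> {0..c}" for s
    using that wpos w0 wc by (cases "s = 0"; cases "s = c") (auto simp: less_le)
  have hc: "continuous_on {0..c} h" by (rule continuous_on_subset[OF hcont]) auto
  have pc: "continuous_on {0..c} (\<lambda>s. \<bar>w s\<bar> powr (p - 1))"
    by (rule continuous_on_powr') (use p in \<open>auto intro!: continuous_intros cont\<close>)
  have phic: "continuous_on {0..c} \<phi>"
    unfolding \<phi>_def by (intro continuous_intros hc pc cont)
  have phiint: "\<phi> integrable_on {0..x}" if "x \<le> c" for x
    by (rule integrable_continuous_interval, rule continuous_on_subset[OF phic]) (use that in auto)
  define a where "a = g (c/2) - integral {0..c/2} \<phi>"
  define G where "G s = a + integral {0..s} \<phi>" for s
  have Gc: "continuous_on {0..c} G"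
    unfolding G_def by (intro continuous_intros indefinite_integral_continuous_1 phiint) simp
  have Gder: "(G has_real_derivative \<phi> x) (at x within {0..c})" if "x \<in> {0..c}" for x
  proof -
    have "((\<lambda>u. integral {0..u} \<phi>) has_vector_derivative \<phi> x) (at x within {0..c})"
      by (rule integral_has_vector_derivative[OF phic that])
    then have "((\<lambda>u. a + integral {0..u} \<phi>) has_real_derivative 0 + \<phi> x) (at x within {0..c})"
      unfolding has_real_derivative_iff_has_vector_derivative[symmetric]
      by (intro DERIV_add) auto
    then show ?thesis unfolding G_def by simp
  qed
  have Gder': "(G has_real_derivative \<phi> x) (at x)" if "x \<in> {0<..<c}" for x
    using Gder[of x] that at_within_Icc_at[of 0 x c] by auto
  have geq: "g x = G x" if "x \<in> {0<..<c}" for x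
  proof -
    have "(\<lambda>s. g s - G s) x = (\<lambda>s. g s - G s) (c/2)"
    proof (rule DERIV_isconst3[of 0 c x "c/2" "\<lambda>s. g s - G s"])
      fix y assume y: "y \<in> {0<..<c}"
      have "((\<lambda>s. g s - G s) has_real_derivative \<phi> y - \<phi> y) (at y)"
        using ode y Gder'[OF y] unfolding \<phi>_def by (intro DERIV_diff) auto
      then show "((\<lambda>s. g s - G s) has_real_derivative 0) (at y)" by simp
    qed (use c that in auto)
    then show ?thesis unfolding G_def a_def by simp
  qed
  have weq: "w x = integral {0..x} G" if "x \<in> {0..c}" for x
  proof -
    have "w x = integral {0..x} g" using H that unfolding H10_def by auto
    also have "\<dots> = integral {0..x} G"
      by (rule integral_spike[of "{0,c}"]) (use that geq in auto)
    finally show ?thesis .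
  qed
  have G0: "G 0 = a" unfolding G_def by simp
  have der0: "(w has_real_derivative a) (at 0 within {0..c})"
  proof -
    have "((\<lambda>u. integral {0..u} G) has_vector_derivative G 0) (at 0 within {0..c})"
      by (rule integral_has_vector_derivative[OF Gc]) (use c in auto)
    then have "((\<lambda>u. integral {0..u} G) has_real_derivative a) (at 0 within {0..c})"
      unfolding has_real_derivative_iff_has_vector_derivative G0 .
    then show ?thesis
      by (rule has_field_derivative_transform_within[where d=1]) (use c weq in auto)
  qed
  have phinp: "\<phi> s \<le> 0" if "s \<in> {0..c}" for s
  proof (cases "s = 0")
    case True then show ?thesis using w0 unfolding \<phi>_def by simp
  next
    case False
    then have "h s > 0" using hpos that by auto
    then show ?thesis unfolding \<phi>_def using wnn[OF that] by simp
  qed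
  have Gle: "G s \<le> a" if "s \<in> {0..c}" for s
  proof -
    have "integral {0..s} \<phi> \<le> integral {0..s} (\<lambda>_. 0)"
      by (rule integral_le) (use that phiint phinp in auto)
    then show ?thesis unfolding G_def by simp
  qed
  have Gint: "G integrable_on {0..x}" if "x \<le> c" for x
    by (rule integrable_continuous_interval, rule continuous_on_subset[OF Gc]) (use that in auto)
  have wle: "w x \<le> a * x" if "x \<in> {0..c}" for x
  proof -
    have "integral {0..x} G \<le> integral {0..x} (\<lambda>_. a)"
      by (rule integral_le) (use that Gint Gle in auto)
    then show ?thesis using weq[OF that] that by (simp add: mult.commute)
  qed
  have apos: "a > 0"
  proof -
    have "0 < w (c/2)" using wpos c by auto
    also have "\<dots> \<le> a * (c/2)" using wle[of "c/2"] c by auto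
    finally show ?thesis using c by (simp add: zero_less_mult_iff)
  qed
  have G2c: "continuous_on {0..c} (\<lambda>s. (G s)^2)" by (intro continuous_intros Gc)
  have intg: "integral {0..c} (\<lambda>s. (g s)^2) = integral {0..c} (\<lambda>s. (G s)^2)"
    by (rule integral_spike[of "{0,c}"]) (use geq in auto)
  have lower: "a^2*\<delta>/4 \<le> integral {0..c} (\<lambda>s. (g s)^2)"
    if d: "0 \<le> \<delta>" "\<delta> \<le> c" "M * (a*\<delta>) powr p * \<delta> \<le> a/2" for \<delta>
  proof -
    define K where "K = M * (a*\<delta>) powr p"
    have phib: "- K \<le> \<phi> r" if r: "r \<in> {0..\<delta>}" for r
    proof -
      have rc: "r \<in> {0..c}" using r d by auto
      have "\<bar>w r\<bar> powr (p - 1) * w r = w r powr p"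
        using wnn[OF rc] powr_times_self[of "w r" "p-1"] by simp
      moreover have "h r * w r powr p \<le> K"
      proof (cases "r = 0")
        case True then show ?thesis using w0 M0 apos d unfolding K_def
          by simp
      next
        case False
        then have hr: "h r > 0" "h r \<le> M" using hpos hM r by auto
        have "w r \<le> a * \<delta>" using wle[OF rc] apos r
          by (meson atLeastAtMost_iff mult_left_mono less_imp_le order_trans)
        then have "w r powr p \<le> (a*\<delta>) powr p" using wnn[OF rc] p by (intro powr_mono2) auto
        then show ?thesis unfolding K_def using hr by (intro mult_mono) auto
      qed
      ultimately show ?thesis unfolding \<phi>_def by (simp add: mult.assoc)
    qed
    have Gge: "G s \<ge> a/2" if s: "s \<in> {0..\<delta>}" for s
    proof -
      have "integral {0..s} (\<lambda>_. - K) \<le> integral {0..s} \<phi>"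
        by (rule integral_le) (use s d phiint phib in auto)
      then have "- (K * s) \<le> integral {0..s} \<phi>" using s by (simp add: mult.commute)
      moreover have "K * s \<le> K * \<delta>"
        using s M0 apos d unfolding K_def
        by (intro mult_left_mono) (auto intro!: mult_nonneg_nonneg)
      moreover have "K * \<delta> \<le> a/2" using d(3) unfolding K_def .
      ultimately show ?thesis unfolding G_def by linarith
    qed
    have "integral {0..\<delta>} (\<lambda>_. a^2/4) \<le> integral {0..\<delta>} (\<lambda>s. (G s)^2)"
    proof (rule integral_le)
      show "(\<lambda>s. (G s)^2) integrable_on {0..\<delta>}"
        by (rule integrable_continuous_interval, rule continuous_on_subset[OF G2c]) (use d in auto)
      fix s assume "s \<in> {0..\<delta>}"
      then have "a/2 \<le> G s" by (rule Gge)
      then have "(a/2)^2 \<le> (G s)^2" using apos by (intro power_mono) auto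
      then show "a^2/4 \<le> (G s)^2" by (simp add: power_divide)
    qed auto
    also have "\<dots> \<le> integral {0..\<delta>} (\<lambda>s. (G s)^2) + integral {\<delta>..c} (\<lambda>s. (G s)^2)"
      using d by (auto intro!: integral_nonneg integrable_continuous_interval continuous_on_subset[OF G2c])
    also have "\<dots> = integral {0..c} (\<lambda>s. (G s)^2)"
      by (rule Henstock_Kurzweil_Integration.integral_combine)
         (use d in \<open>auto intro: integrable_continuous_interval G2c\<close>)
    finally show ?thesis using d intg by (simp add: mult.commute)
  qed
  have energy_id: "integral {0..c} (\<lambda>s. (g s)^2) = integral {0..c} (\<lambda>s. h s * \<bar>w s\<bar> powr (p+1))"
  proof -
    have "((\<lambda>x. G x * G x + w x * \<phi> x) has_integral (w c * G c - w 0 * G 0)) {0..c}"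
    proof (rule fundamental_theorem_of_calculus_interior)
      show "continuous_on {0..c} (\<lambda>x. w x * G x)" by (intro continuous_intros cont Gc)
      fix x assume x: "x \<in> {0<..<c}"
      have "(w has_real_derivative g x) (at x)"
        using ode x DERIV_deriv_iff_real_differentiable unfolding g_def by blast
      then have "(w has_real_derivative G x) (at x)" using geq[OF x] by simp
      then have "((\<lambda>x. w x * G x) has_real_derivative G x * G x + w x * \<phi> x) (at x)"
        using DERIV_mult[OF _ Gder'[OF x], of w "G x"] by (simp add: mult.commute)
      then show "((\<lambda>x. w x * G x) has_vector_derivative G x * G x + w x * \<phi> x) (at x)"
        unfolding has_real_derivative_iff_has_vector_derivative .
    qed (use c in auto)
    then have I0: "((\<lambda>x. G x * G x + w x * \<phi> x) has_integral 0) {0..c}" using w0 wc by simp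
    have eqx: "(G x)^2 - h x * \<bar>w x\<bar> powr (p+1) = G x * G x + w x * \<phi> x" if "x \<in> {0..c} - {}" for x
    proof -
      from that have "x \<in> {0..c}" by auto
      then have "w x * \<phi> x = - h x * \<bar>w x\<bar> powr (p+1)"
        unfolding \<phi>_def using wnn powr_times_self[of "w x" "p-1"] powr_times_self[of "w x" p]
        by (simp add: algebra_simps)
      then show ?thesis by (simp add: power2_eq_square)
    qed
    have "((\<lambda>x. (G x)^2 - h x * \<bar>w x\<bar> powr (p+1)) has_integral 0) {0..c}"
      by (rule has_integral_spike_finite[of "{}", OF _ eqx I0]) auto
    then have "integral {0..c} (\<lambda>x. (G x)^2 - h x * \<bar>w x\<bar> powr (p+1)) = 0"
      by (rule integral_unique)
    moreover have "continuous_on {0..c} (\<lambda>x. h x * \<bar>w x\<bar> powr (p+1))"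
      by (intro continuous_intros hc continuous_on_powr') (use p in \<open>auto intro!: continuous_intros cont\<close>)
    ultimately show ?thesis
      using intg by (simp add: integral_diff integrable_continuous_interval G2c)
  qed
  show ?thesis
    using der0 apos lower energy_id unfolding g_def by blast
qed

lemma energy_upper:
  fixes h :: "real \<Rightarrow> real" and p c :: real
  assumes p: "p > 1" and hcont: "continuous_on {0..} h" and hpos: "\<forall>s>0. h s > 0"
    and c: "c > 0" and I: "integral {0..c/2} (\<lambda>s. s powr (p + 1) * h s) > 0"
  shows "energy h p c \<le> (4*c/3) / (integral {0..c/2} (\<lambda>s. s powr (p + 1) * h s)) powr (2/(p+1))"
proof -
  define I where "I = integral {0..c/2} (\<lambda>s. s powr (p + 1) * h s)"
  define g where "g x = 2 - 4*x/c" for x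
  define v where "v x = 2*x*(c-x)/c" for x
  have gc: "continuous_on {0..c} g" unfolding g_def using c by (intro continuous_intros) auto
  have g2c: "continuous_on {0..c} (\<lambda>s. (g s)^2)" unfolding g_def using c by (intro continuous_intros) auto
  have vint: "v x = integral {0..x} g" if "x \<in> {0..c}" for x
  proof -
    have "(g has_integral v x - v 0) {0..x}"
    proof (rule fundamental_theorem_of_calculus)
      fix y assume "y \<in> {0..x}"
      have "(v has_real_derivative g y) (at y within {0..x})"
        unfolding v_def g_def using c
        by (auto intro!: derivative_eq_intros simp: field_simps)
      then show "(v has_vector_derivative g y) (at y within {0..x})"
        unfolding has_real_derivative_iff_has_vector_derivative .
    qed (use that in auto)
    then show ?thesis unfolding v_def by (simp add: integral_unique)
  qed
  have H: "H10 c v g"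
    unfolding H10_def using gc g2c vint c
    by (auto intro: integrable_continuous_interval simp: v_def)
  have num: "integral {0..c} (\<lambda>s. (g s)^2) = 4*c/3"
  proof -
    define F where "F x = - (c/12) * (2 - 4*x/c)^3" for x
    have "((\<lambda>s. (g s)^2) has_integral F c - F 0) {0..c}"
    proof (rule fundamental_theorem_of_calculus)
      fix y assume "y \<in> {0..c}"
      have "(F has_real_derivative (g y)^2) (at y within {0..c})"
        unfolding F_def g_def using c
        by (auto intro!: derivative_eq_intros simp: field_simps power2_eq_square) algebra
      then show "(F has_vector_derivative (g y)^2) (at y within {0..c})"
        unfolding has_real_derivative_iff_has_vector_derivative .
    qed (use c in auto)
    then show ?thesis unfolding F_def using c by (simp add: integral_unique field_simps)
  qed
  define D where "D = integral {0..c} (\<lambda>s. h s * \<bar>v s\<bar> powr (p+1))"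
  have hc: "continuous_on {0..c} h" by (rule continuous_on_subset[OF hcont]) auto
  have vc: "continuous_on {0..c} v" unfolding v_def using c by (intro continuous_intros) auto
  have Dc: "continuous_on {0..c} (\<lambda>s. h s * \<bar>v s\<bar> powr (p+1))"
    by (intro continuous_intros hc continuous_on_powr') (use p in \<open>auto intro!: continuous_intros vc\<close>)
  have Dnn: "integral {c/2..c} (\<lambda>s. h s * \<bar>v s\<bar> powr (p+1)) \<ge> 0"
  proof (rule integral_nonneg)
    fix x assume "x \<in> {c/2..c}"
    then have "h x > 0" using hpos c by auto
    then show "0 \<le> h x * \<bar>v x\<bar> powr (p + 1)" by simp
  qed (use c in \<open>auto intro!: integrable_continuous_interval continuous_on_subset[OF Dc]\<close>)
  have DI: "I \<le> integral {0..c/2} (\<lambda>s. h s * \<bar>v s\<bar> powr (p+1))"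
    unfolding I_def
  proof (rule integral_le)
    show "(\<lambda>s. s powr (p + 1) * h s) integrable_on {0..c/2}"
      by (rule integrable_continuous_interval)
         (intro continuous_intros continuous_on_powr' continuous_on_subset[OF hc], use p c in auto)
    show "(\<lambda>s. h s * \<bar>v s\<bar> powr (p+1)) integrable_on {0..c/2}"
      by (rule integrable_continuous_interval) (rule continuous_on_subset[OF Dc], use c in auto)
    fix s assume s: "s \<in> {0..c/2}"
    show "s powr (p + 1) * h s \<le> h s * \<bar>v s\<bar> powr (p+1)"
    proof (cases "s = 0")
      case True then show ?thesis by (simp add: v_def)
    next
      case False
      then have hs: "h s > 0" using hpos s by auto
      have "s * (s * 2) \<le> c * s" using s c mult_right_mono[of "s*2" c s] by (simp add: mult.commute)
      then have "s \<le> v s" using s c unfolding v_def by (simp add: field_simps)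
      then have "s powr (p+1) \<le> \<bar>v s\<bar> powr (p+1)" using s p by (intro powr_mono2) auto
      then show ?thesis using hs by (simp add: mult.commute)
    qed
  qed
  have DI2: "I \<le> D"
    using DI Dnn unfolding D_def
    using Henstock_Kurzweil_Integration.integral_combine[of 0 "c/2" c "\<lambda>s. h s * \<bar>v s\<bar> powr (p+1)"]
      c integrable_continuous_interval[OF Dc] by simp
  have Ipos: "I > 0" using I unfolding I_def .
  have ray: "rayleigh h p c v g \<le> (4*c/3) / I powr (2/(p+1))"
    unfolding rayleigh_def num D_def[symmetric]
  proof (rule divide_left_mono)
    show "I powr (2/(p+1)) \<le> D powr (2/(p+1))" using Ipos DI2 p by (intro powr_mono2) auto
    show "0 < D powr (2/(p+1)) * I powr (2/(p+1))" using Ipos DI2 by simp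
  qed (use c in simp)
  have mem: "rayleigh h p c v g \<in> {rayleigh h p c w g | w g. H10 c w g \<and> (\<exists>s\<in>{0..c}. w s \<noteq> 0)}"
  proof -
    have "v (c/2) \<noteq> 0" "c/2 \<in> {0..c}" using c by (auto simp: v_def)
    then show ?thesis using H by blast
  qed
  have bdd: "bdd_below {rayleigh h p c w g | w g. H10 c w g \<and> (\<exists>s\<in>{0..c}. w s \<noteq> 0)}"
  proof (rule bdd_belowI[of _ 0], clarify)
    fix w g assume "H10 c w g"
    then have "0 \<le> integral {0..c} (\<lambda>s. (g s)^2)" unfolding H10_def by (intro integral_nonneg) auto
    then show "0 \<le> rayleigh h p c w g" unfolding rayleigh_def by simp
  qed
  have "energy h p c \<le> rayleigh h p c v g"
    unfolding energy_def by (rule cInf_lower[OF mem bdd])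
  then show ?thesis using ray unfolding I_def by simp
qed
theorem lemma2p4:
  fixes h :: "real \<Rightarrow> real" and p :: real and W :: "real \<Rightarrow> real \<Rightarrow> real"
  assumes "p > 1"
    and "continuous_on {0..} h"
    and "\<forall>s>0. h s > 0"
    and "bounded (h ` {0..})"
    and "filterlim (\<lambda>t. t powr (- (p + 1) / 2) * integral {0..t} (\<lambda>s. s powr (p + 1) * h s))
           at_top at_top"
    and "\<forall>c>0. least_energy_sol h p c (W c)"
  shows "\<exists>d. (\<forall>c>0. (W c has_real_derivative d c) (at 0 within {0..c}))
             \<and> (d \<longlongrightarrow> 0) at_top"
proof -
  note p = assms(1) and hcont = assms(2) and hpos = assms(3) and grow = assms(5) and les = assms(6)
  obtain M where M: "\<forall>s\<ge>0. \<bar>h s\<bar> \<le> M" and Mpos: "M > 0"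
    using assms(4) unfolding bounded_pos by auto
  define A where "A c = integral {0..c} (\<lambda>s. (deriv (W c) s)^2)" for c
  define I where "I t = integral {0..t} (\<lambda>s. s powr (p + 1) * h s)" for t
  define P where "P c a \<longleftrightarrow> (W c has_real_derivative a) (at 0 within {0..c}) \<and> a > 0
     \<and> (\<forall>\<delta>. 0 \<le> \<delta> \<longrightarrow> \<delta> \<le> c \<longrightarrow> M * (a*\<delta>) powr p * \<delta> \<le> a/2 \<longrightarrow> a^2*\<delta>/4 \<le> A c)
     \<and> energy h p c = A c / (A c) powr (2/(p+1))" for c a
  have "\<forall>c. \<exists>a. c > 0 \<longrightarrow> P c a"
  proof (intro allI impI)
    fix c :: real
    show "\<exists>a. c > 0 \<longrightarrow> P c a"
    proof (cases "c > 0")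
      case True
      then have l: "least_energy_sol h p c (W c)" using les by auto
      from ode_facts[OF p hcont hpos M True l] obtain a where
        a: "(W c has_real_derivative a) (at 0 within {0..c})" "a > 0"
           "\<forall>\<delta>. 0 \<le> \<delta> \<longrightarrow> \<delta> \<le> c \<longrightarrow> M * (a*\<delta>) powr p * \<delta> \<le> a/2 \<longrightarrow> a^2*\<delta>/4 \<le> A c"
           "A c = integral {0..c} (\<lambda>s. h s * \<bar>W c s\<bar> powr (p+1))"
        unfolding A_def by blast
      have "energy h p c = A c / (A c) powr (2/(p+1))"
        using l a(4) unfolding least_energy_sol_def rayleigh_def A_def by simp
      then show ?thesis using a unfolding P_def by blast
    qed simp
  qed
  then obtain d where d: "\<And>c. c > 0 \<Longrightarrow> P c (d c)" by metis
  have lim: "(d \<longlongrightarrow> 0) at_top"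
  proof (rule tendstoI)
    fix \<epsilon> :: real assume e: "\<epsilon> > 0"
    define lam where "lam = min 1 (\<epsilon> / (2*(M+1)))"
    have l0: "lam > 0" "lam \<le> 1" using e Mpos unfolding lam_def by auto
    have Ml: "M * lam powr p * lam \<le> \<epsilon>^2/2"
    proof -
      have "lam powr p \<le> lam powr 1" using l0 p by (intro powr_mono') auto
      then have "lam powr p \<le> lam" using l0 by simp
      then have 1: "M * lam powr p * lam \<le> M * lam * lam" using Mpos l0 by (simp add: mult_left_mono mult_right_mono)
      have "lam \<le> \<epsilon> / (2*(M+1))" unfolding lam_def by simp
      then have 2: "lam * (M+1) \<le> \<epsilon>/2" using Mpos by (simp add: field_simps)
      have 3: "M * lam \<le> \<epsilon>/2" using 2 l0 by (simp add: algebra_simps)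
      have 4: "lam \<le> \<epsilon>/2" using 2 l0 Mpos by (smt (verit) mult_le_cancel_left1)
      have "M * lam * lam \<le> (\<epsilon>/2) * (\<epsilon>/2)" using 3 4 l0 Mpos e by (intro mult_mono) auto
      also have "\<dots> \<le> \<epsilon>^2/2" using e by (simp add: power2_eq_square)
      finally show ?thesis using 1 by linarith
    qed
    define e' where "e' = 1 - 2/(p+1)"
    have e'0: "e' > 0" using p unfolding e'_def by (simp add: field_simps)
    define \<eta> where "\<eta> = \<epsilon> * lam / 4"
    have eta0: "\<eta> > 0" using e l0 unfolding \<eta>_def by simp
    define \<eta>' where "\<eta>' = \<eta> powr e'"
    have eta'0: "\<eta>' > 0" using eta0 unfolding \<eta>'_def by simp
    define L where "L = (16/(3*\<eta>')) powr ((p+1)/2)"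
    have "\<forall>\<^sub>F t in at_top. L \<le> t powr (- (p + 1) / 2) * I t"
      using grow unfolding filterlim_at_top I_def by blast
    then obtain N where N: "\<And>t. t \<ge> N \<Longrightarrow> L \<le> t powr (- (p + 1) / 2) * I t"
      unfolding eventually_at_top_linorder by blast
    show "\<forall>\<^sub>F c in at_top. dist (d c) 0 < \<epsilon>"
      unfolding eventually_at_top_linorder
    proof (intro exI[of _ "max (2 * max N 1) (lam/\<epsilon>)"] allI impI)
      fix c assume c: "c \<ge> max (2 * max N 1) (lam/\<epsilon>)"
      define t where "t = c/2"
      have t: "t \<ge> N" "t \<ge> 1" using c unfolding t_def by auto
      have c0: "c > 0" using t unfolding t_def by simp
      have Pc: "P c (d c)" by (rule d[OF c0])
      have a0: "d c > 0" using Pc unfolding P_def by blast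
      have "d c < \<epsilon>"
      proof (rule ccontr)
        assume "\<not> d c < \<epsilon>"
        then have ae: "d c \<ge> \<epsilon>" by simp
        define a where "a = d c"
        define \<delta> where "\<delta> = lam / a"
        have "\<delta> \<le> lam / \<epsilon>" unfolding \<delta>_def a_def using ae e l0 by (intro divide_left_mono) auto
        then have dc: "\<delta> \<le> c" "\<delta> \<ge> 0" using c l0 a0 unfolding \<delta>_def a_def by auto
        have ad: "a * \<delta> = lam" unfolding \<delta>_def using a0 a_def by simp
        have "\<epsilon>^2 \<le> a^2" using ae e a_def by (intro power_mono) auto
        then have "M * lam powr p * lam \<le> a^2/2" using Ml by linarith
        then have "(M * lam powr p * lam) / a \<le> (a^2/2) / a" using a0 a_def by (intro divide_right_mono) auto
        then have "M * (a*\<delta>) powr p * \<delta> \<le> a/2"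
          unfolding ad unfolding \<delta>_def using a0 a_def by (simp add: power2_eq_square)
        then have "a^2*\<delta>/4 \<le> A c" using Pc dc unfolding P_def a_def by blast
        moreover have "a^2*\<delta>/4 = a * lam / 4" unfolding \<delta>_def using a0 a_def by (simp add: power2_eq_square)
        moreover have "\<epsilon> * lam / 4 \<le> a * lam / 4" using ae l0 a_def by (simp add: mult_right_mono)
        ultimately have Ae: "\<eta> \<le> A c" unfolding \<eta>_def by linarith
        have "energy h p c = A c / (A c) powr (2/(p+1))" using Pc unfolding P_def by blast
        also have "\<dots> = A c powr e'" unfolding e'_def using Ae eta0 by (simp add: powr_diff)
        also have "\<dots> \<ge> \<eta>'" unfolding \<eta>'_def using Ae eta0 e'0 by (intro powr_mono2) auto
        finally have Elow: "energy h p c \<ge> \<eta>'" .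
        have ft: "L \<le> t powr (- (p + 1) / 2) * I t" by (rule N[OF t(1)])
        have L0: "L > 0" unfolding L_def using eta'0 by simp
        have tp: "t powr ((p + 1) / 2) * t powr (- (p + 1) / 2) = 1"
        proof -
          have e0: "(p + 1) / 2 + (- (p + 1) / 2) = 0" by (simp add: field_simps)
          have "t powr ((p + 1) / 2) * t powr (- (p + 1) / 2) = t powr ((p + 1) / 2 + (- (p + 1) / 2))"
            by (rule powr_add[symmetric])
          also have "\<dots> = 1" unfolding e0 using t by simp
          finally show ?thesis .
        qed
        have It: "L * t powr ((p + 1) / 2) \<le> I t"
        proof -
          have "L * t powr ((p + 1) / 2) \<le> t powr (- (p + 1) / 2) * I t * t powr ((p + 1) / 2)"
            using ft t by (simp add: mult_right_mono)
          also have "\<dots> = I t" using tp by (simp add: algebra_simps)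
          finally show ?thesis .
        qed
        have Ipos: "I t > 0" using It L0 t by (smt (verit) powr_gt_zero mult_pos_pos)
        have e1: "(p + 1) / 2 * (2 / (p + 1)) = 1" using p by (simp add: field_simps)
        have "(L * t powr ((p + 1) / 2)) powr (2/(p+1)) = L powr (2/(p+1)) * t"
        proof -
          have "(L * t powr ((p + 1) / 2)) powr (2/(p+1)) = L powr (2/(p+1)) * (t powr ((p + 1) / 2)) powr (2/(p+1))"
            by (rule powr_mult)
          also have "(t powr ((p + 1) / 2)) powr (2/(p+1)) = t powr ((p + 1) / 2 * (2 / (p + 1)))"
            by (rule powr_powr)
          also have "\<dots> = t" unfolding e1 using t by simp
          finally show ?thesis .
        qed
        also have "L powr (2/(p+1)) = 16/(3*\<eta>')"
        proof -
          have "L powr (2/(p+1)) = (16/(3*\<eta>')) powr ((p+1)/2 * (2/(p+1)))"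
            unfolding L_def by (rule powr_powr)
          also have "\<dots> = 16/(3*\<eta>')" unfolding e1 using eta'0 by simp
          finally show ?thesis .
        qed
        finally have eqL: "(L * t powr ((p + 1) / 2)) powr (2/(p+1)) = 16/(3*\<eta>') * t" .
        have "(L * t powr ((p + 1) / 2)) powr (2/(p+1)) \<le> I t powr (2/(p+1))"
          using It L0 t p by (intro powr_mono2) auto
        then have Ibig: "16/(3*\<eta>') * t \<le> I t powr (2/(p+1))" using eqL by simp
        have It': "I (c/2) > 0" using Ipos unfolding t_def .
        have "energy h p c \<le> (4*c/3) / (I (c/2)) powr (2/(p+1))"
          using energy_upper[OF p hcont hpos c0] It' unfolding I_def by blast
        also have "\<dots> = (8*t/3) / (I t) powr (2/(p+1))" unfolding t_def by simp
        also have "\<dots> \<le> (8*t/3) / (16/(3*\<eta>') * t)"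
          using Ibig t eta'0 Ipos by (intro divide_left_mono) auto
        also have "\<dots> = \<eta>'/2" using t eta'0 by (simp add: field_simps)
        finally have Eup: "energy h p c \<le> \<eta>'/2" .
        show False using Elow Eup eta'0 by simp
      qed
      then show "dist (d c) 0 < \<epsilon>" using a0 by simp
    qed
  qed
  show ?thesis using d lim unfolding P_def by blast
qed
end
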